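(* Let $\mathcal{A}$ be the free associative $\mathbb{C}$-algebra on two noncommuting generators $L$ and $R$, let $S=\{FG-GF : F,G \text{ nonempty balanced words}\}$, and let $\mathcal{J}$ be the two-sided ideal of $\mathcal{A}$ generated by $S$. Let $\Upsilon$ be the set of equivalence classes (under $\sim$) of upper primes and $\Lambda$ the set of equivalence classes of lower primes. For each $\upsilon\in\Upsilon$ choose an arbitrary representative $U_\upsilon\in\upsilon$, and for each $\lambda\in\Lambda$ choose an arbitrary representative $D_\lambda\in\lambda$. Define $$S'''=\{U_\upsilon D_\lambda-D_\lambda U_\upsilon : \upsilon\in\Upsilon,\ \lambda\in\Lambda\}.$$ Then $S'''\subseteq S$, $S'''$ generates $\mathcal{J}$ as a two-sided ideal, and no proper subset of $S'''$ generates $\mathcal{J}$.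
   Context: Words are finite products of the letters $L,R$ (the empty word is allowed and is the identity); the words form a $\mathbb{C}$-basis of $\mathcal{A}$. A word is balanced if it contains equally many $L$'s and $R$'s. For words $X,Y$ write $X\sim Y$ if $X-Y\in\mathcal{J}$; this is an equivalence relation on words. A word is prime if it is nonempty, balanced, and cannot be written as a product of two nonempty balanced words. For a balanced word $W=a_1\cdots a_n$ and $0\le k\le n$, its $k$-th elevation is $e_k(W)=\sum_{i=1}^k \overline{a_i}$, where $\overline{R}=1$, $\overline{L}=-1$. A prime word $P$ is an upper prime if $e_k(P)>0$ for all $1\le k\le l(P)-1$, and a lower prime if $e_k(P)<0$ for all $1\le k\le l(P)-1$ (every prime is exactly one of these), where $l(P)$ is the length of $P$. *)

theory Defs
  imports Complex_Main "HOL-Library.Poly_Mapping"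
begin

datatype letter = L | R

text \<open>Wrapper type for words, so that concatenation can serve as the monoid
  structure of the exponents of the free monoid algebra.\<close>
datatype word = Word "letter list"

fun word_list :: "word \<Rightarrow> letter list" where
  "word_list (Word xs) = xs"

instantiation word :: monoid_add
begin
definition zero_word :: word where "zero_word = Word []"
definition plus_word :: "word \<Rightarrow> word \<Rightarrow> word" where
  "plus_word u v = Word (word_list u @ word_list v)"
instance
proof
  fix a b c :: word
  show "a + b + c = a + (b + c)"
    by (cases a; cases b; cases c) (simp add: plus_word_def)
  show "0 + a = a" by (cases a) (simp add: plus_word_def zero_word_def)
  show "a + 0 = a" by (cases a) (simp add: plus_word_def zero_word_def)
qed
end

text \<open>Finitely supported complex coefficient functions on words, with the
  convolution product of the monoid algebra (Poly_Mapping): this is the free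
  associative \<complex>-algebra on L, R.\<close>
type_synonym alg = "word \<Rightarrow>\<^sub>0 complex"

definition mon :: "letter list \<Rightarrow> alg" where
  "mon w = Poly_Mapping.single (Word w) 1"

inductive_set gen_ideal :: "alg set \<Rightarrow> alg set" for T :: "alg set" where
  base: "s \<in> T \<Longrightarrow> s \<in> gen_ideal T"
| zero: "0 \<in> gen_ideal T"
| add: "x \<in> gen_ideal T \<Longrightarrow> y \<in> gen_ideal T \<Longrightarrow> x + y \<in> gen_ideal T"
| mult: "x \<in> gen_ideal T \<Longrightarrow> a * x * b \<in> gen_ideal T"

definition balanced :: "letter list \<Rightarrow> bool" where
  "balanced w \<longleftrightarrow> count_list w L = count_list w R"

definition S_set :: "alg set" where
  "S_set = {mon F * mon G - mon G * mon F | F G.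
              F \<noteq> [] \<and> balanced F \<and> G \<noteq> [] \<and> balanced G}"

definition J :: "alg set" where
  "J = gen_ideal S_set"

definition word_equiv :: "letter list \<Rightarrow> letter list \<Rightarrow> bool" (infix "\<sim>\<^sub>J" 50) where
  "X \<sim>\<^sub>J Y \<longleftrightarrow> mon X - mon Y \<in> J"

definition prime_word :: "letter list \<Rightarrow> bool" where
  "prime_word P \<longleftrightarrow> P \<noteq> [] \<and> balanced P \<and>
     \<not> (\<exists>A B. A \<noteq> [] \<and> B \<noteq> [] \<and> balanced A \<and> balanced B \<and> P = A @ B)"

definition bar :: "letter \<Rightarrow> int" where
  "bar a = (case a of R \<Rightarrow> 1 | L \<Rightarrow> -1)"

definition elevation :: "nat \<Rightarrow> letter list \<Rightarrow> int" where
  "elevation k W = (\<Sum>i<k. bar (W ! i))"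

definition upper_prime :: "letter list \<Rightarrow> bool" where
  "upper_prime P \<longleftrightarrow> prime_word P \<and> (\<forall>k. 1 \<le> k \<and> k \<le> length P - 1 \<longrightarrow> elevation k P > 0)"

definition lower_prime :: "letter list \<Rightarrow> bool" where
  "lower_prime P \<longleftrightarrow> prime_word P \<and> (\<forall>k. 1 \<le> k \<and> k \<le> length P - 1 \<longrightarrow> elevation k P < 0)"

definition eq_class :: "letter list \<Rightarrow> letter list set" where
  "eq_class X = {Y. X \<sim>\<^sub>J Y}"

definition Upsilon :: "letter list set set" where
  "Upsilon = {eq_class X | X. upper_prime X}"

definition Lambda :: "letter list set set" where
  "Lambda = {eq_class X | X. lower_prime X}"

end

theory Submission
  imports Defs
begin

definition hh :: "letter list \<Rightarrow> int" where
  "hh w = int (count_list w R) - int (count_list w L)"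

lemma hh_simps[simp]: "hh [] = 0" "hh (x # xs) = bar x + hh xs" "hh (xs @ ys) = hh xs + hh ys"
  by (auto simp: hh_def bar_def split: letter.splits)

lemma balanced_hh: "balanced w \<longleftrightarrow> hh w = 0"
  by (auto simp add: balanced_def hh_def)

lemma elevation_hh: "k \<le> length W \<Longrightarrow> elevation k W = hh (take k W)"
proof (induction k)
  case 0 then show ?case by (simp add: elevation_def)
next
  case (Suc k)
  then have "elevation (Suc k) W = elevation k W + bar (W ! k)" by (simp add: elevation_def)
  moreover have "take (Suc k) W = take k W @ [W ! k]" using Suc.prems by (simp add: take_Suc_conv_app_nth)
  ultimately show ?case using Suc by simp
qed

definition pos :: "int \<Rightarrow> letter list \<Rightarrow> bool" where
  "pos s W \<longleftrightarrow> (\<forall>k. 0 < k \<and> k < length W \<longrightarrow> s * hh (take k W) > 0)"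

lemma upper_iff: "upper_prime W \<longleftrightarrow> W \<noteq> [] \<and> balanced W \<and> pos 1 W"
proof
  assume u: "upper_prime W"
  then have p: "prime_word W" by (simp add: upper_prime_def)
  have "pos 1 W" unfolding pos_def
  proof (intro allI impI)
    fix k
    assume k: "0 < k \<and> k < length W"
    then have "elevation k W > 0" using u unfolding upper_prime_def by auto
    then show "1 * hh (take k W) > 0" using k elevation_hh[of k W] by auto
  qed
  then show "W \<noteq> [] \<and> balanced W \<and> pos 1 W" using p by (simp add: prime_word_def)
next
  assume a: "W \<noteq> [] \<and> balanced W \<and> pos 1 W"
  have "prime_word W" unfolding prime_word_def
  proof (intro conjI notI)
    assume "\<exists>A B. A \<noteq> [] \<and> B \<noteq> [] \<and> balanced A \<and> balanced B \<and> W = A @ B"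
    then obtain A B where "A \<noteq> []" "B \<noteq> []" "balanced A" "W = A @ B" by blast
    moreover have "0 < length A" "length A < length W" using calculation by auto
    ultimately show False using a by (auto simp: pos_def balanced_hh dest!: spec[of _ "length A"])
  qed (use a in auto)
  moreover have "elevation k W > 0" if "1 \<le> k \<and> k \<le> length W - 1" for k
    using that a elevation_hh[of k W] by (auto simp: pos_def)
  ultimately show "upper_prime W" by (simp add: upper_prime_def)
qed

lemma lower_iff: "lower_prime W \<longleftrightarrow> W \<noteq> [] \<and> balanced W \<and> pos (-1) W"
proof
  assume u: "lower_prime W"
  then have p: "prime_word W" by (simp add: lower_prime_def)
  have "pos (-1) W" unfolding pos_def
  proof (intro allI impI)
    fix k
    assume k: "0 < k \<and> k < length W"
    then have "elevation k W < 0" using u unfolding lower_prime_def by auto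
    then show "-1 * hh (take k W) > 0" using k elevation_hh[of k W] by auto
  qed
  then show "W \<noteq> [] \<and> balanced W \<and> pos (-1) W" using p by (simp add: prime_word_def)
next
  assume a: "W \<noteq> [] \<and> balanced W \<and> pos (-1) W"
  have "prime_word W" unfolding prime_word_def
  proof (intro conjI notI)
    assume "\<exists>A B. A \<noteq> [] \<and> B \<noteq> [] \<and> balanced A \<and> balanced B \<and> W = A @ B"
    then obtain A B where "A \<noteq> []" "B \<noteq> []" "balanced A" "W = A @ B" by blast
    moreover have "0 < length A" "length A < length W" using calculation by auto
    ultimately show False using a by (auto simp: pos_def balanced_hh dest!: spec[of _ "length A"])
  qed (use a in auto)
  moreover have "elevation k W < 0" if "1 \<le> k \<and> k \<le> length W - 1" for k
    using that a elevation_hh[of k W] by (auto simp: pos_def)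
  ultimately show "lower_prime W" by (simp add: lower_prime_def)
qed


lemma pos_swap:
  assumes p: "pos s (a@F@G@b)" and bF: "balanced F" and bG: "balanced G"
  shows "pos s (a@G@F@b)"
proof (cases "F = [] \<or> G = []")
  case True then show ?thesis using p by auto
next
  case False
  have hF: "hh F = 0" and hG: "hh G = 0" using bF bG by (auto simp: balanced_hh)
  show ?thesis unfolding pos_def
  proof (intro allI impI)
    fix k assume k: "0 < k \<and> k < length (a@G@F@b)"
    have key: "\<exists>k'. 0 < k' \<and> k' < length (a@F@G@b) \<and> hh (take k' (a@F@G@b)) = hh (take k (a@G@F@b))"
    proof -
      consider (c1) "k \<le> length a" | (c2) "length a < k \<and> k < length a + length G"
        | (c3) "k = length a + length G" | (c4) "length a + length G < k \<and> k < length a + length G + length F"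
        | (c5) "length a + length G + length F \<le> k" by linarith
      then show ?thesis
      proof cases
        case c1 then show ?thesis using k False by (intro exI[of _ k]) auto
      next
        case c2 then show ?thesis using k False hF hG by (intro exI[of _ "k + length F"]) auto
      next
        case c3 then show ?thesis using k False hF hG by (intro exI[of _ "length a + length F"]) auto
      next
        case c4 then show ?thesis using k False hF hG by (intro exI[of _ "k - length G"]) (auto simp: algebra_simps)
      next
        case c5 then show ?thesis using k False hF hG by (intro exI[of _ k]) (auto simp: algebra_simps)
      qed
    qed
    then obtain k' where "0 < k' \<and> k' < length (a@F@G@b)" "hh (take k' (a@F@G@b)) = hh (take k (a@G@F@b))" by blast
    then show "s * hh (take k (a@G@F@b)) > 0" using p unfolding pos_def by metis
  qed
qed

lemma ivt:
  assumes s: "s = 1 \<or> s = -1" and m: "m \<le> length W" "1 \<le> m"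
    and one: "s * hh (take 1 W) > 0" and nz: "\<forall>j. 1 \<le> j \<and> j \<le> m \<longrightarrow> hh (take j W) \<noteq> 0"
  shows "s * hh (take m W) > 0"
  using m nz
proof (induction m)
  case 0 then show ?case by simp
next
  case (Suc m)
  show ?case
  proof (cases "m = 0")
    case True then show ?thesis using one by simp
  next
    case False
    then have IH: "s * hh (take m W) > 0" using Suc by auto
    have t: "take (Suc m) W = take m W @ [W ! m]" using Suc.prems by (simp add: take_Suc_conv_app_nth)
    have "hh (take (Suc m) W) \<noteq> 0" using Suc.prems by auto
    moreover have "bar (W ! m) = 1 \<or> bar (W ! m) = -1" by (auto simp: bar_def split: letter.splits)
    ultimately show ?thesis using IH s t by auto
  qed
qed

lemma balanced_nonempty_len: "balanced W \<Longrightarrow> W \<noteq> [] \<Longrightarrow> length W \<ge> 2"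
  by (cases W; cases "tl W") (auto simp: balanced_hh bar_def split: letter.splits)

lemma prime_cases:
  assumes pr: "prime_word P"
  shows "(upper_prime P \<and> hd P = R) \<or> (lower_prime P \<and> hd P = L)"
proof -
  have ne: "P \<noteq> []" and bal: "balanced P" using pr by (auto simp: prime_word_def)
  define s where "s = bar (hd P)"
  have s: "s = 1 \<or> s = -1" by (auto simp: s_def bar_def split: letter.splits)
  have t1: "take 1 P = [hd P]" using ne by (cases P) auto
  have "s * hh (take 1 P) = s * s" unfolding t1 s_def by simp
  then have one: "s * hh (take 1 P) > 0" using s by auto
  have "pos s P" unfolding pos_def
  proof (intro allI impI)
    fix k assume k: "0 < k \<and> k < length P"
    show "s * hh (take k P) > 0"
    proof (rule ivt[OF s _ _ one])
      show "\<forall>j. 1 \<le> j \<and> j \<le> k \<longrightarrow> hh (take j P) \<noteq> 0"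
      proof (intro allI impI notI)
        fix j assume j: "1 \<le> j \<and> j \<le> k" and h0: "hh (take j P) = 0"
        have "hh (drop j P) = 0" using h0 bal by (metis append_take_drop_id balanced_hh add_0 hh_simps(3))
        then show False using pr j k h0 unfolding prime_word_def balanced_hh
          by (metis append_take_drop_id drop_eq_Nil not_less take_eq_Nil le_trans not_one_le_zero)
      qed
    qed (use k in auto)
  qed
  then show ?thesis using ne bal s unfolding upper_iff lower_iff s_def
    by (cases "hd P") (auto simp: bar_def)
qed

lemma upper_shape:
  assumes "upper_prime P" shows "\<exists>X. P = R # X @ [L] \<and> balanced X"
proof -
  have ne: "P \<noteq> []" and bal: "balanced P" and p: "pos 1 P" using assms by (auto simp: upper_iff)
  have len: "length P \<ge> 2" using balanced_nonempty_len ne bal by auto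
  obtain c Q where P: "P = c # Q" using ne by (cases P) auto
  have "Q \<noteq> []" using len P by auto
  then obtain X d where Q: "Q = X @ [d]" by (cases Q rule: rev_cases) auto
  have "1 * hh (take 1 P) > 0" using p len unfolding pos_def by auto
  then have c: "c = R" using P by (cases c) (auto simp: bar_def)
  have "1 * hh (take (length P - 1) P) > 0" using p len unfolding pos_def by auto
  then have hX: "hh (c # X) > 0" using P Q by simp
  have "hh P = 0" using bal by (simp add: balanced_hh)
  then have "d = L" using hX P Q by (cases d) (auto simp: bar_def)
  then show ?thesis using P Q c bal by (auto simp: balanced_hh bar_def)
qed

lemma lower_shape:
  assumes "lower_prime P" shows "\<exists>X. P = L # X @ [R] \<and> balanced X"
proof -
  have ne: "P \<noteq> []" and bal: "balanced P" and p: "pos (-1) P" using assms by (auto simp: lower_iff)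
  have len: "length P \<ge> 2" using balanced_nonempty_len ne bal by auto
  obtain c Q where P: "P = c # Q" using ne by (cases P) auto
  have "Q \<noteq> []" using len P by auto
  then obtain X d where Q: "Q = X @ [d]" by (cases Q rule: rev_cases) auto
  have "-1 * hh (take 1 P) > 0" using p len unfolding pos_def by auto
  then have c: "c = L" using P by (cases c) (auto simp: bar_def)
  have "-1 * hh (take (length P - 1) P) > 0" using p len unfolding pos_def by auto
  then have hX: "hh (c # X) < 0" using P Q by simp
  have "hh P = 0" using bal by (simp add: balanced_hh)
  then have "d = R" using hX P Q by (cases d) (auto simp: bar_def)
  then show ?thesis using P Q c bal by (auto simp: balanced_hh bar_def)
qed

lemma upper_hd: "upper_prime P \<Longrightarrow> hd P = R" using upper_shape by fastforce
lemma lower_hd: "lower_prime P \<Longrightarrow> hd P = L" using lower_shape by fastforce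

lemma word_list_plus[simp]: "word_list (u + v) = word_list u @ word_list v"
  by (simp add: plus_word_def)

lemma mon_mult: "mon X * mon Y = mon (X @ Y)"
  by (simp add: mon_def mult_single plus_word_def)

lemma gi_neg: "x \<in> gen_ideal T \<Longrightarrow> - x \<in> gen_ideal T"
  using gen_ideal.mult[of x T "-1" 1] by simp

lemma gi_diff: "x \<in> gen_ideal T \<Longrightarrow> y \<in> gen_ideal T \<Longrightarrow> x - y \<in> gen_ideal T"
  using gen_ideal.add[OF _ gi_neg] by (metis diff_conv_add_uminus)

lemma gi_cong: "mon X - mon Y \<in> gen_ideal T \<Longrightarrow> mon (a@X@b) - mon (a@Y@b) \<in> gen_ideal T"
proof -
  assume "mon X - mon Y \<in> gen_ideal T"
  then have "mon a * (mon X - mon Y) * mon b \<in> gen_ideal T" by (rule gen_ideal.mult)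
  then show ?thesis by (simp add: algebra_simps mon_mult)
qed

lemma gi_refl: "mon X - mon X \<in> gen_ideal T" using gen_ideal.zero by simp

lemma gi_sym: "mon X - mon Y \<in> gen_ideal T \<Longrightarrow> mon Y - mon X \<in> gen_ideal T"
  using gi_neg by fastforce

lemma gi_trans: "mon X - mon Y \<in> gen_ideal T \<Longrightarrow> mon Y - mon Z \<in> gen_ideal T \<Longrightarrow> mon X - mon Z \<in> gen_ideal T"
  using gen_ideal.add by fastforce

lemma gen_ideal_mono: "T \<subseteq> gen_ideal S \<Longrightarrow> gen_ideal T \<subseteq> gen_ideal S"
proof
  fix x assume "T \<subseteq> gen_ideal S" "x \<in> gen_ideal T"
  then show "x \<in> gen_ideal S"
    by (induction rule: gen_ideal.induct[OF \<open>x \<in> gen_ideal T\<close>]) (auto intro: gen_ideal.intros)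
qed

definition psi :: "letter list set \<Rightarrow> alg \<Rightarrow> complex" where
  "psi C p = (\<Sum>w\<in>Poly_Mapping.keys p. if word_list w \<in> C then Poly_Mapping.lookup p w else 0)"

lemma psi_super:
  assumes "finite K" "Poly_Mapping.keys p \<subseteq> K"
  shows "psi C p = (\<Sum>w\<in>K. if word_list w \<in> C then Poly_Mapping.lookup p w else 0)"
  unfolding psi_def using assms
  by (intro sum.mono_neutral_left) (auto simp: in_keys_iff)

lemma psi_add: "psi C (p + q) = psi C p + psi C q"
proof -
  let ?K = "Poly_Mapping.keys p \<union> Poly_Mapping.keys q"
  have "psi C (p + q) = (\<Sum>w\<in>?K. if word_list w \<in> C then Poly_Mapping.lookup (p+q) w else 0)"
    by (rule psi_super) (use keys_add[of p q] in auto)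
  also have "\<dots> = (\<Sum>w\<in>?K. if word_list w \<in> C then Poly_Mapping.lookup p w else 0)
      + (\<Sum>w\<in>?K. if word_list w \<in> C then Poly_Mapping.lookup q w else 0)"
    unfolding sum.distrib[symmetric] by (intro sum.cong) (auto simp: lookup_add)
  also have "\<dots> = psi C p + psi C q"
    by (subst (1 2) psi_super[of ?K]) auto
  finally show ?thesis .
qed

lemma psi_zero[simp]: "psi C 0 = 0" by (simp add: psi_def)

lemma psi_uminus: "psi C (- p) = - psi C p"
  using psi_add[of C "-p" p] by (simp add: eq_neg_iff_add_eq_0)

lemma psi_diff: "psi C (p - q) = psi C p - psi C q"
  using psi_add[of C p "-q"] psi_uminus[of C q] by simp

lemma psi_single: "psi C (Poly_Mapping.single k c) = (if word_list k \<in> C then c else 0)"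
  by (subst psi_super[of "{k}"]) auto

lemma psi_mon: "psi C (mon X) = (if X \<in> C then 1 else 0)"
  by (simp add: mon_def psi_single)

lemma pm_induct:
  assumes "P 0" "\<And>f k c. P f \<Longrightarrow> P (f + Poly_Mapping.single k c)"
  shows "P (f :: alg)"
proof (induction f rule: update_induct)
  case const then show ?case using assms by simp
next
  case (update f a b)
  have "Poly_Mapping.update a b f = f + Poly_Mapping.single a b"
    using update.hyps by (intro poly_mapping_eqI) (auto simp: lookup_update lookup_add lookup_single in_keys_iff when_def)
  then show ?case using assms update by simp
qed

lemma psi_ideal:
  assumes T: "\<forall>t\<in>T. \<exists>X Y. t = mon X - mon Y \<and> (\<forall>a b. (a@X@b \<in> C) = (a@Y@b \<in> C))"
    and p: "p \<in> gen_ideal T"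
  shows "psi C p = 0"
proof -
  have "\<forall>a b. psi C (a * p * b) = 0" using p
  proof (induction rule: gen_ideal.induct)
    case (base s)
    then obtain X Y where s: "s = mon X - mon Y" and XY: "\<forall>a b. (a@X@b \<in> C) = (a@Y@b \<in> C)"
      using T by blast
    have sing: "psi C (Poly_Mapping.single k c * s * Poly_Mapping.single l d) = 0" for k l c d
      using XY[rule_format, of "word_list k" "word_list l"]
      by (simp add: s mon_def algebra_simps mult_single psi_diff psi_single)
    have sing2: "psi C (Poly_Mapping.single k c * s * b) = 0" for k c b
    proof (induction b rule: pm_induct)
      case (2 f l d) then show ?case using sing[of k c l d] by (simp add: distrib_left psi_add)
    qed simp
    show ?case
    proof (intro allI)
      fix a b show "psi C (a * s * b) = 0"
      proof (induction a rule: pm_induct)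
        case (2 f k c) then show ?case using sing2[of k c b] by (simp add: distrib_right psi_add)
      qed simp
    qed
  next
    case zero then show ?case by simp
  next
    case (add x y) then show ?case by (simp add: distrib_left distrib_right psi_add)
  next
    case (mult x a' b')
    show ?case
    proof (intro allI)
      fix a b
      have "a * (a' * x * b') * b = (a * a') * x * (b' * b)" by (simp add: mult.assoc)
      then show "psi C (a * (a' * x * b') * b) = 0" using mult.IH by simp
    qed
  qed
  then show ?thesis by (metis mult_1 mult_1_right)
qed

lemma psi_ideal_mon:
  assumes T: "\<forall>t\<in>T. \<exists>X Y. t = mon X - mon Y \<and> (\<forall>a b. (a@X@b \<in> C) = (a@Y@b \<in> C))"
    and p: "mon X - mon Y \<in> gen_ideal T" and X: "X \<in> C"
  shows "Y \<in> C"
  using psi_ideal[OF T p] X by (simp add: psi_diff psi_mon split: if_splits)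

lemma swap_S: "F \<noteq> [] \<Longrightarrow> G \<noteq> [] \<Longrightarrow> balanced F \<Longrightarrow> balanced G \<Longrightarrow> mon (F@G) - mon (G@F) \<in> J"
  unfolding J_def by (rule gen_ideal.base) (auto simp: S_set_def mon_mult)

lemma swapJ: "F \<noteq> [] \<Longrightarrow> G \<noteq> [] \<Longrightarrow> balanced F \<Longrightarrow> balanced G \<Longrightarrow> (a@F@G@b) \<sim>\<^sub>J (a@G@F@b)"
  unfolding word_equiv_def using gi_cong[of "F@G" "G@F" S_set a b] swap_S by (simp add: J_def)

lemma weq_refl: "X \<sim>\<^sub>J X" unfolding word_equiv_def J_def by (rule gi_refl)
lemma weq_sym: "X \<sim>\<^sub>J Y \<Longrightarrow> Y \<sim>\<^sub>J X" unfolding word_equiv_def J_def by (rule gi_sym)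
lemma weq_trans: "X \<sim>\<^sub>J Y \<Longrightarrow> Y \<sim>\<^sub>J Z \<Longrightarrow> X \<sim>\<^sub>J Z" unfolding word_equiv_def J_def by (rule gi_trans)

lemma eq_class_eq: "X \<sim>\<^sub>J Y \<Longrightarrow> eq_class X = eq_class Y"
  unfolding eq_class_def using weq_sym weq_trans by blast

lemma S_set_form: "\<forall>t\<in>S_set. \<exists>X Y. t = mon X - mon Y \<and>
   (\<exists>F G. X = F@G \<and> Y = G@F \<and> F \<noteq> [] \<and> G \<noteq> [] \<and> balanced F \<and> balanced G)"
  by (auto simp: S_set_def mon_mult)

lemma closed_J:
  assumes sw: "\<And>a b F G. F \<noteq> [] \<Longrightarrow> G \<noteq> [] \<Longrightarrow> balanced F \<Longrightarrow> balanced G \<Longrightarrow>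
         (a@F@G@b \<in> C) \<Longrightarrow> (a@G@F@b \<in> C)"
    and "X \<sim>\<^sub>J Y" "X \<in> C"
  shows "Y \<in> C"
proof (rule psi_ideal_mon[of S_set C X Y])
  show "\<forall>t\<in>S_set. \<exists>X Y. t = mon X - mon Y \<and> (\<forall>a b. (a@X@b \<in> C) = (a@Y@b \<in> C))"
  proof
    fix t assume "t \<in> S_set"
    then obtain F G where t: "t = mon (F@G) - mon (G@F)" and FG: "F \<noteq> []" "G \<noteq> []" "balanced F" "balanced G"
      using S_set_form by blast
    have "(a@(F@G)@b \<in> C) = (a@(G@F)@b \<in> C)" for a b
      using sw[OF FG, of a b] sw[OF FG(2,1,4,3), of a b] by auto
    then show "\<exists>X Y. t = mon X - mon Y \<and> (\<forall>a b. (a@X@b \<in> C) = (a@Y@b \<in> C))"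
      using t by blast
  qed
qed (use assms in \<open>auto simp: word_equiv_def J_def\<close>)

lemma balanced_app: "balanced (a@F@G@b) \<Longrightarrow> balanced (a@G@F@b)"
  by (simp add: balanced_hh)

lemma upper_closed: "X \<sim>\<^sub>J Y \<Longrightarrow> upper_prime X \<Longrightarrow> upper_prime Y"
  using closed_J[of "{W. upper_prime W}" X Y] pos_swap balanced_app
  unfolding upper_iff by (auto simp: balanced_hh)

lemma lower_closed: "X \<sim>\<^sub>J Y \<Longrightarrow> lower_prime X \<Longrightarrow> lower_prime Y"
  using closed_J[of "{W. lower_prime W}" X Y] pos_swap balanced_app
  unfolding lower_iff by (auto simp: balanced_hh)

lemma not_upper_lower: "upper_prime P \<Longrightarrow> lower_prime P \<Longrightarrow> False"
  using upper_hd lower_hd by fastforce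

lemma app_split1: "xs @ ys = us @ vs \<Longrightarrow> length us \<le> length xs \<Longrightarrow> xs = us @ take (length xs - length us) vs"
  by (drule arg_cong[of _ _ "take (length xs)"]) simp

lemma app_split2: "xs @ ys = us @ vs \<Longrightarrow> length xs \<le> length us \<Longrightarrow> take (length xs) us = xs"
  by (drule arg_cong[of _ _ "take (length xs)"]) simp

lemma split_UD:
  assumes W: "a@F@G@b = Uw@Dw" and Uw: "upper_prime Uw" and Dw: "lower_prime Dw"
    and F: "F \<noteq> []" "balanced F" and G: "G \<noteq> []" "balanced G"
  shows "(\<exists>c. Uw = a@F@G@c \<and> b = c@Dw) \<or> (\<exists>c. Dw = c@F@G@b \<and> a = Uw@c) \<or> (a=[] \<and> b=[] \<and> F=Uw \<and> G=Dw)"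
proof -
  have pU: "pos 1 Uw" and pD: "pos (-1) Dw" and hU: "hh Uw = 0" and hD: "hh Dw = 0"
    using Uw Dw by (auto simp: upper_iff lower_iff balanced_hh)
  have hF: "hh F = 0" "hh G = 0" using F G by (auto simp: balanced_hh)
  consider (in1) "length (a@F@G) \<le> length Uw" | (in2) "length Uw \<le> length a"
    | (cr) "length a < length Uw \<and> length Uw < length (a@F@G)" by linarith
  then show ?thesis
  proof cases
    case in1
    define c where "c = take (length Uw - length (a@F@G)) b"
    have "Uw = (a@F@G) @ c" using app_split1[of Uw Dw "a@F@G" b] W in1 unfolding c_def by simp
    moreover then have "b = c @ Dw" using W by simp
    ultimately show ?thesis by auto
  next
    case in2
    define c where "c = take (length a - length Uw) Dw"
    have "a = Uw @ c" using app_split1[of a "F@G@b" Uw Dw] W in2 unfolding c_def by simp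
    moreover then have "Dw = c@F@G@b" using W by simp
    ultimately show ?thesis by auto
  next
    case cr
    have lW: "length a + length F + length G + length b = length Uw + length Dw"
      using arg_cong[OF W, of length] by simp
    define k where "k = length (a@F@G) - length Uw"
    have k: "0 < k" "k \<le> length Dw" using cr lW unfolding k_def by simp_all
    have afg: "a@F@G = Uw @ take k Dw" unfolding k_def
      by (rule app_split1) (use W cr in simp_all)
    have hk: "hh (take k Dw) \<le> 0"
    proof (cases "k < length Dw")
      case True
      then have "-1 * hh (take k Dw) > 0" using pD k unfolding pos_def by blast
      then show ?thesis by simp
    next
      case False then show ?thesis using k hD by simp
    qed
    have hafg: "hh a = hh (take k Dw)"
    proof -
      have "hh (a@F@G) = hh (Uw @ take k Dw)" using afg by simp
      then show ?thesis using hU hF by simp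
    qed
    have a0: "a = []"
    proof (rule ccontr)
      assume "a \<noteq> []"
      then have "1 * hh (take (length a) Uw) > 0" using pU cr unfolding pos_def by simp
      moreover have "take (length a) Uw = a" 
        by (rule app_split2[of a "F@G@b" Uw Dw]) (use W cr in simp_all)
      ultimately show False using hk hafg by simp
    qed
    have kD: "k = length Dw"
    proof (rule ccontr)
      assume "k \<noteq> length Dw"
      then have "k < length Dw" using k by simp
      then have "-1 * hh (take k Dw) > 0" using pD k unfolding pos_def by blast
      then show False using hafg a0 by simp
    qed
    have e: "a@F@G = Uw@Dw" using afg kD by simp
    have "(a@F@G)@b = Uw@Dw" using W by simp
    then have "(Uw@Dw)@b = Uw@Dw" by (simp only: e)
    then have b0: "b = []" by simp
    have FG: "F@G = Uw@Dw" using e a0 by simp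
    have lFG: "length F + length G = length Uw + length Dw" using arg_cong[OF FG, of length] by simp
    have lG: "length G > 0" using G by simp
    have "length F = length Uw"
    proof (rule ccontr)
      assume ne: "length F \<noteq> length Uw"
      show False
      proof (cases "length F < length Uw")
        case True
        have "take (length F) Uw = F" by (rule app_split2[OF FG]) (use True in simp)
        moreover have "1 * hh (take (length F) Uw) > 0" using pU True F unfolding pos_def by simp
        ultimately show False using hF by simp
      next
        case False
        define j where "j = length F - length Uw"
        have j: "0 < j" "j < length Dw" using False ne lFG G(1) unfolding j_def by (cases G; simp)+
        have "F = Uw @ take j Dw" unfolding j_def by (rule app_split1[OF FG]) (use False in simp)
        moreover have "-1 * hh (take j Dw) > 0" using pD j unfolding pos_def by blast
        ultimately show False using hF hU by simp
      qed
    qed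
    moreover have "take (length F) Uw = F" by (rule app_split2[OF FG]) (use calculation in simp)
    ultimately have FU: "F = Uw" by simp
    then have "G = Dw" using FG by simp
    then show ?thesis using FU a0 b0 by simp
  qed
qed

lemma claim:
  fixes U D :: "letter list set \<Rightarrow> letter list" and T :: "alg set"
  assumes U_rep: "\<forall>ups\<in>Upsilon. U ups \<in> ups" and D_rep: "\<forall>lam\<in>Lambda. D lam \<in> lam"
    and gen: "\<And>ups lam. ups \<in> Upsilon \<Longrightarrow> lam \<in> Lambda \<Longrightarrow> mon (U ups @ D lam) - mon (D lam @ U ups) \<in> gen_ideal T"
  shows "F \<noteq> [] \<Longrightarrow> G \<noteq> [] \<Longrightarrow> balanced F \<Longrightarrow> balanced G \<Longrightarrow> mon (F@G) - mon (G@F) \<in> gen_ideal T"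
proof (induction "length F + length G" arbitrary: F G rule: less_induct)
  case less
  let ?n = "length F + length G"
  have IH: "mon (F'@G') - mon (G'@F') \<in> gen_ideal T"
    if "balanced F'" "balanced G'" "length F' + length G' < ?n" for F' G'
  proof (cases "F' = [] \<or> G' = []")
    case True then show ?thesis using gi_refl by auto
  next
    case False then show ?thesis using less.hyps that by auto
  qed
  have short: "mon X - mon Y \<in> gen_ideal T" if XY: "X \<sim>\<^sub>J Y" and lX: "length X < ?n" for X Y
  proof -
    let ?C = "{Z. length Z = length X \<and> mon X - mon Z \<in> gen_ideal T}"
    have "Y \<in> ?C"
    proof (rule closed_J[OF _ XY])
      fix a b F' G' assume F': "F' \<noteq> []" "balanced F'" and G': "G' \<noteq> []" "balanced G'"
        and inC: "a@F'@G'@b \<in> ?C"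
      have "mon (F'@G') - mon (G'@F') \<in> gen_ideal T" using IH F' G' inC lX by auto
      from gi_cong[OF this, of a b] have "mon (a@F'@G'@b) - mon (a@G'@F'@b) \<in> gen_ideal T" by simp
      then show "a@G'@F'@b \<in> ?C" using inC gi_trans by auto
    qed (use gi_refl in auto)
    then show ?thesis by simp
  qed
  have UD: "mon (P@Q) - mon (Q@P) \<in> gen_ideal T"
    if P: "upper_prime P" and Q: "lower_prime Q" and len: "length P + length Q = ?n" for P Q
  proof -
    define ups where "ups = eq_class P"
    define lam where "lam = eq_class Q"
    have ups: "ups \<in> Upsilon" using P by (auto simp: Upsilon_def ups_def)
    have lam: "lam \<in> Lambda" using Q by (auto simp: Lambda_def lam_def)
    have PU: "P \<sim>\<^sub>J U ups" using U_rep ups by (auto simp: ups_def eq_class_def)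
    have QD: "Q \<sim>\<^sub>J D lam" using D_rep lam by (auto simp: lam_def eq_class_def)
    have nP: "P \<noteq> []" and nQ: "Q \<noteq> []" using P Q by (auto simp: upper_iff lower_iff)
    have lP: "length P < ?n" and lQ: "length Q < ?n" using len nP nQ by (cases P; cases Q; simp)+
    have e1: "mon P - mon (U ups) \<in> gen_ideal T" using short[OF PU lP] .
    have e2: "mon Q - mon (D lam) \<in> gen_ideal T" using short[OF QD lQ] .
    have s1: "mon (P@Q) - mon (U ups @ Q) \<in> gen_ideal T" using gi_cong[OF e1, of "[]" Q] by simp
    have s2: "mon (U ups @ Q) - mon (U ups @ D lam) \<in> gen_ideal T" using gi_cong[OF e2, of "U ups" "[]"] by simp
    have s3: "mon (D lam @ U ups) - mon (Q @ U ups) \<in> gen_ideal T" using gi_cong[OF gi_sym[OF e2], of "[]" "U ups"] by simp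
    have s4: "mon (Q @ U ups) - mon (Q @ P) \<in> gen_ideal T" using gi_cong[OF gi_sym[OF e1], of Q "[]"] by simp
    show ?thesis using gi_trans[OF gi_trans[OF gi_trans[OF s1 s2] gen[OF ups lam]] gi_trans[OF s3 s4]] .
  qed
  have bLR: "balanced [L,R]" "balanced [R,L]" by (auto simp: balanced_def)
  show ?case
  proof (cases "prime_word F")
    case False
    then obtain F1 F2 where F: "F = F1@F2" "F1 \<noteq> []" "F2 \<noteq> []" "balanced F1" "balanced F2"
      using less.prems by (auto simp: prime_word_def)
    have "mon (F2@G) - mon (G@F2) \<in> gen_ideal T" using IH F less.prems by auto
    from gi_cong[OF this, of F1 "[]"] have a: "mon (F1@F2@G) - mon (F1@G@F2) \<in> gen_ideal T" by simp
    have "mon (F1@G) - mon (G@F1) \<in> gen_ideal T" using IH F less.prems by auto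
    from gi_cong[OF this, of "[]" F2] have b: "mon (F1@G@F2) - mon (G@F1@F2) \<in> gen_ideal T" by simp
    show ?thesis using gi_trans[OF a b] F by simp
  next
    case pF: True
    show ?thesis
    proof (cases "prime_word G")
      case False
      then obtain G1 G2 where G: "G = G1@G2" "G1 \<noteq> []" "G2 \<noteq> []" "balanced G1" "balanced G2"
        using less.prems by (auto simp: prime_word_def)
      have "mon (F@G1) - mon (G1@F) \<in> gen_ideal T" using IH G less.prems by auto
      from gi_cong[OF this, of "[]" G2] have a: "mon (F@G1@G2) - mon (G1@F@G2) \<in> gen_ideal T" by simp
      have "mon (F@G2) - mon (G2@F) \<in> gen_ideal T" using IH G less.prems by auto
      from gi_cong[OF this, of G1 "[]"] have b: "mon (G1@F@G2) - mon (G1@G2@F) \<in> gen_ideal T" by simp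
      show ?thesis using gi_trans[OF a b] G by simp
    next
      case pG: True
      have lenF: "length F \<ge> 2" and lenG: "length G \<ge> 2"
        using less.prems balanced_nonempty_len by auto
      consider "upper_prime F" "upper_prime G" | "upper_prime F" "lower_prime G"
        | "lower_prime F" "upper_prime G" | "lower_prime F" "lower_prime G"
        using prime_cases[OF pF] prime_cases[OF pG] by blast
      then show ?thesis
      proof cases
        case 1
        obtain X where X: "F = R # X @ [L]" "balanced X" using upper_shape 1 by blast
        obtain Y where Y: "G = R # Y @ [L]" "balanced Y" using upper_shape 1 by blast
        have "mon ([L,R]@Y) - mon (Y@[L,R]) \<in> gen_ideal T" using IH[of "[L,R]" Y] bLR X Y by simp
        from gi_cong[OF this, of X "[]"] have a: "mon (X@[L,R]@Y) - mon (X@Y@[L,R]) \<in> gen_ideal T" by simp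
        have "mon (X@Y) - mon (Y@X) \<in> gen_ideal T" using IH[of X Y] X Y by simp
        from gi_cong[OF this, of "[]" "[L,R]"] have b: "mon (X@Y@[L,R]) - mon (Y@X@[L,R]) \<in> gen_ideal T" by simp
        have "mon (X@[L,R]) - mon ([L,R]@X) \<in> gen_ideal T" using IH[of X "[L,R]"] bLR X Y by simp
        from gi_cong[OF this, of Y "[]"] have c: "mon (Y@X@[L,R]) - mon (Y@[L,R]@X) \<in> gen_ideal T" by simp
        from gi_cong[OF gi_trans[OF gi_trans[OF a b] c], of "[R]" "[L]"]
        show ?thesis using X Y by simp
      next
        case 2 then show ?thesis using UD by simp
      next
        case 3 then show ?thesis using UD[of G F] gi_sym by (simp add: add.commute)
      next
        case 4
        obtain X where X: "F = L # X @ [R]" "balanced X" using lower_shape 4 by blast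
        obtain Y where Y: "G = L # Y @ [R]" "balanced Y" using lower_shape 4 by blast
        have "mon ([R,L]@Y) - mon (Y@[R,L]) \<in> gen_ideal T" using IH[of "[R,L]" Y] bLR X Y by simp
        from gi_cong[OF this, of X "[]"] have a: "mon (X@[R,L]@Y) - mon (X@Y@[R,L]) \<in> gen_ideal T" by simp
        have "mon (X@Y) - mon (Y@X) \<in> gen_ideal T" using IH[of X Y] X Y by simp
        from gi_cong[OF this, of "[]" "[R,L]"] have b: "mon (X@Y@[R,L]) - mon (Y@X@[R,L]) \<in> gen_ideal T" by simp
        have "mon (X@[R,L]) - mon ([R,L]@X) \<in> gen_ideal T" using IH[of X "[R,L]"] bLR X Y by simp
        from gi_cong[OF this, of Y "[]"] have c: "mon (Y@X@[R,L]) - mon (Y@[R,L]@X) \<in> gen_ideal T" by simp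
        from gi_cong[OF gi_trans[OF gi_trans[OF a b] c], of "[L]" "[R]"]
        show ?thesis using X Y by simp
      qed
    qed
  qed
qed

definition fC :: "letter list \<Rightarrow> letter list \<Rightarrow> letter list \<Rightarrow> bool" where
  "fC U0 D0 W \<longleftrightarrow> (\<exists>Uw Dw. W = Uw@Dw \<and> upper_prime Uw \<and> Uw \<sim>\<^sub>J U0 \<and> lower_prime Dw \<and> Dw \<sim>\<^sub>J D0)"

lemma fC_swap:
  assumes f: "fC U0 D0 (a@F@G@b)" and F: "F \<noteq> []" "balanced F" and G: "G \<noteq> []" "balanced G"
    and nt: "\<not> (upper_prime F \<and> F \<sim>\<^sub>J U0 \<and> lower_prime G \<and> G \<sim>\<^sub>J D0)"
  shows "fC U0 D0 (a@G@F@b)"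
proof -
  obtain Uw Dw where W: "a@F@G@b = Uw@Dw" and Uw: "upper_prime Uw" "Uw \<sim>\<^sub>J U0"
    and Dw: "lower_prime Dw" "Dw \<sim>\<^sub>J D0" using f by (auto simp: fC_def)
  from split_UD[OF W Uw(1) Dw(1) F G] consider
    (u) c where "Uw = a@F@G@c" "b = c@Dw" | (d) c where "Dw = c@F@G@b" "a = Uw@c"
    | (t) "a=[]" "b=[]" "F=Uw" "G=Dw" by blast
  then show ?thesis
  proof cases
    case u
    have e: "Uw \<sim>\<^sub>J (a@G@F@c)" using swapJ[OF F(1) G(1) F(2) G(2)] u by simp
    then have "upper_prime (a@G@F@c)" "(a@G@F@c) \<sim>\<^sub>J U0" using upper_closed Uw weq_sym weq_trans by blast+
    then show ?thesis unfolding fC_def using u Dw by (intro exI[of _ "a@G@F@c"] exI[of _ Dw]) simp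
  next
    case d
    have e: "Dw \<sim>\<^sub>J (c@G@F@b)" using swapJ[OF F(1) G(1) F(2) G(2)] d by simp
    then have "lower_prime (c@G@F@b)" "(c@G@F@b) \<sim>\<^sub>J D0" using lower_closed Dw weq_sym weq_trans by blast+
    then show ?thesis unfolding fC_def using d Uw by (intro exI[of _ Uw] exI[of _ "c@G@F@b"]) simp
  next
    case t then show ?thesis using nt Uw Dw by simp
  qed
qed

theorem theorem5p8:
  fixes U D :: "letter list set \<Rightarrow> letter list"
  assumes U_rep: "\<forall>ups\<in>Upsilon. U ups \<in> ups"
      and D_rep: "\<forall>lam\<in>Lambda. D lam \<in> lam"
  defines "S''' \<equiv> {mon (U ups) * mon (D lam) - mon (D lam) * mon (U ups) | ups lam.
                      ups \<in> Upsilon \<and> lam \<in> Lambda}"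
  shows "S''' \<subseteq> S_set \<and> gen_ideal S''' = J \<and> (\<forall>T. T \<subset> S''' \<longrightarrow> gen_ideal T \<noteq> J)"
proof -
  have Uup: "upper_prime (U ups) \<and> eq_class (U ups) = ups" if ups_in: "ups \<in> Upsilon" for ups
  proof -
    obtain X where X: "ups = eq_class X" "upper_prime X" using ups_in unfolding Upsilon_def by blast
    have "U ups \<in> ups" using U_rep ups_in by blast
    then have "U ups \<in> eq_class X" using X(1) by simp
    then have XU: "X \<sim>\<^sub>J U ups" unfolding eq_class_def by simp
    have "eq_class X = eq_class (U ups)" using eq_class_eq[OF XU] .
    then have "eq_class (U ups) = ups" using X(1) by metis
    then show ?thesis using upper_closed[OF XU X(2)] by blast
  qed
  have Dlo: "lower_prime (D lam) \<and> eq_class (D lam) = lam" if lam_in: "lam \<in> Lambda" for lam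
  proof -
    obtain X where X: "lam = eq_class X" "lower_prime X" using lam_in unfolding Lambda_def by blast
    have "D lam \<in> lam" using D_rep lam_in by blast
    then have "D lam \<in> eq_class X" using X(1) by simp
    then have XU: "X \<sim>\<^sub>J D lam" unfolding eq_class_def by simp
    have "eq_class X = eq_class (D lam)" using eq_class_eq[OF XU] .
    then have "eq_class (D lam) = lam" using X(1) by metis
    then show ?thesis using lower_closed[OF XU X(2)] by blast
  qed
  have S3: "S''' = {mon (U ups @ D lam) - mon (D lam @ U ups) | ups lam. ups \<in> Upsilon \<and> lam \<in> Lambda}"
    unfolding S'''_def by (simp add: mon_mult)
  have p1: "S''' \<subseteq> S_set"
  proof
    fix s assume "s \<in> S'''"
    then obtain ups lam where s: "s = mon (U ups) * mon (D lam) - mon (D lam) * mon (U ups)"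
      and ul: "ups \<in> Upsilon" "lam \<in> Lambda" unfolding S'''_def by blast
    show "s \<in> S_set" using Uup[OF ul(1)] Dlo[OF ul(2)] s
      unfolding S_set_def upper_iff lower_iff by blast
  qed
  have p2: "gen_ideal S''' = J"
  proof
    show "gen_ideal S''' \<subseteq> J" unfolding J_def
      by (rule gen_ideal_mono) (use p1 gen_ideal.base in blast)
    have gen: "mon (U ups @ D lam) - mon (D lam @ U ups) \<in> gen_ideal S'''"
      if "ups \<in> Upsilon" "lam \<in> Lambda" for ups lam
      using that by (intro gen_ideal.base) (auto simp: S3)
    have "S_set \<subseteq> gen_ideal S'''"
    proof
      fix s assume "s \<in> S_set"
      then obtain F G where "s = mon (F@G) - mon (G@F)" "F \<noteq> []" "G \<noteq> []" "balanced F" "balanced G"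
        using S_set_form by blast
      then show "s \<in> gen_ideal S'''" using claim[OF U_rep D_rep gen] by blast
    qed
    then show "J \<subseteq> gen_ideal S'''" unfolding J_def by (rule gen_ideal_mono)
  qed
  have p3: "gen_ideal T \<noteq> J" if T: "T \<subset> S'''" for T
  proof
    assume TJ: "gen_ideal T = J"
    obtain s0 where s0: "s0 \<in> S'''" "s0 \<notin> T" using T by blast
    then obtain ups0 lam0 where s0e: "s0 = mon (U ups0 @ D lam0) - mon (D lam0 @ U ups0)"
      and ul0: "ups0 \<in> Upsilon" "lam0 \<in> Lambda" unfolding S3 by blast
    define U0 where "U0 = U ups0"
    define D0 where "D0 = D lam0"
    let ?C = "{W. fC U0 D0 W}"
    have U0: "upper_prime U0" and D0: "lower_prime D0" using Uup[OF ul0(1)] Dlo[OF ul0(2)] by (auto simp: U0_def D0_def)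
    have Tform: "\<forall>t\<in>T. \<exists>X Y. t = mon X - mon Y \<and> (\<forall>a b. (a@X@b \<in> ?C) = (a@Y@b \<in> ?C))"
    proof
      fix t assume tT: "t \<in> T"
      then have "t \<in> S'''" using T by blast
      then obtain ups lam where te: "t = mon (U ups @ D lam) - mon (D lam @ U ups)"
        and ul: "ups \<in> Upsilon" "lam \<in> Lambda" unfolding S3 by blast
      define P where "P = U ups"
      define Q where "Q = D lam"
      have P: "upper_prime P" and Q: "lower_prime Q" using Uup[OF ul(1)] Dlo[OF ul(2)] by (auto simp: P_def Q_def)
      have Pn: "P \<noteq> []" "balanced P" and Qn: "Q \<noteq> []" "balanced Q" using P Q by (auto simp: upper_iff lower_iff)
      have nt: "\<not> (P \<sim>\<^sub>J U0 \<and> Q \<sim>\<^sub>J D0)"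
      proof
        assume a: "P \<sim>\<^sub>J U0 \<and> Q \<sim>\<^sub>J D0"
        then have "eq_class P = eq_class U0" "eq_class Q = eq_class D0" using eq_class_eq by blast+
        then have "ups = ups0" "lam = lam0" using Uup[OF ul(1)] Uup[OF ul0(1)] Dlo[OF ul(2)] Dlo[OF ul0(2)]
          unfolding P_def U0_def Q_def D0_def by simp_all
        then show False using te s0e s0 tT by simp
      qed
      show "\<exists>X Y. t = mon X - mon Y \<and> (\<forall>a b. (a@X@b \<in> ?C) = (a@Y@b \<in> ?C))"
      proof (intro exI conjI allI)
        show "t = mon (P@Q) - mon (Q@P)" using te by (simp add: P_def Q_def)
        fix a b
        have n1: "\<not> (upper_prime P \<and> P \<sim>\<^sub>J U0 \<and> lower_prime Q \<and> Q \<sim>\<^sub>J D0)" using nt by blast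
        have n2: "\<not> (upper_prime Q \<and> Q \<sim>\<^sub>J U0 \<and> lower_prime P \<and> P \<sim>\<^sub>J D0)" using Q not_upper_lower by blast
        show "(a@(P@Q)@b \<in> ?C) = (a@(Q@P)@b \<in> ?C)"
        proof
          assume "a@(P@Q)@b \<in> ?C"
          then have "fC U0 D0 (a@P@Q@b)" by simp
          from fC_swap[OF this Pn Qn n1] show "a@(Q@P)@b \<in> ?C" by simp
        next
          assume "a@(Q@P)@b \<in> ?C"
          then have "fC U0 D0 (a@Q@P@b)" by simp
          from fC_swap[OF this Qn Pn n2] show "a@(P@Q)@b \<in> ?C" by simp
        qed
      qed
    qed
    have "s0 \<in> J" using s0(1) p1 unfolding J_def by (blast intro: gen_ideal.base)
    then have "mon (U0@D0) - mon (D0@U0) \<in> gen_ideal T" using TJ s0e by (simp add: U0_def D0_def)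
    moreover have "U0@D0 \<in> ?C" using U0 D0 weq_refl by (auto simp: fC_def)
    ultimately have "D0@U0 \<in> ?C" by (rule psi_ideal_mon[OF Tform])
    then obtain Uw Dw where "D0@U0 = Uw@Dw" "upper_prime Uw" by (auto simp: fC_def)
    moreover have "D0 \<noteq> []" "Uw \<noteq> []" using D0 calculation by (auto simp: lower_iff upper_iff)
    ultimately have eq: "D0@U0 = Uw@Dw" and nD: "D0 \<noteq> []" and nU: "Uw \<noteq> []" and uU: "upper_prime Uw" by blast+
    have h1: "hd (D0@U0) = L" using nD lower_hd[OF D0] by simp
    have h2: "hd (Uw@Dw) = R" using nU upper_hd[OF uU] by simp
    show False using h1 h2 eq by (metis letter.distinct(1))
  qed
  show ?thesis using p1 p2 p3 by blast
qed

end
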